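(* Let $n\ge 3$, and let $F$ be the free group on $s_1,\dots,s_{n-1}$ and $R$ the normal closure in $F$ of the relators $[s_i,s_j]$ ($1\le i<j-1\le n-2$), $[s_i,s_{i+1},s_i]$ and $[s_i,s_{i+1},s_{i+1}]$ ($1\le i\le n-2$), $[[s_i,s_{i+1}],[s_{i+1},s_{i+2}]]$ ($1\le i\le n-3$), so that $F/R\cong\mathrm{UT}_n(\mathbb Z)$. Suppose that for integers $a_{ij}$ ($1\le i<j-1\le n-2$), $b_i,c_i$ ($1\le i\le n-2$) and $d_i\in\{0,1\}$ ($1\le i\le n-3$) the element $$\prod_{i<j-1}[s_i,s_j]^{a_{ij}}\cdot\prod_i[s_i,s_{i+1},s_i]^{b_i}\cdot\prod_i[s_i,s_{i+1},s_is_{i+1}^{-1}]^{c_i}\cdot\prod_i[[s_i,s_{i+1}],[s_{i+1},s_{i+2}]]^{d_i}$$ lies in $[R,F]$. Then all $a_{ij},b_i,c_i,d_i$ are zero.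
   Context: Commutator conventions: $[a,b]=a^{-1}b^{-1}ab$, and commutators are left-normed: $[a_1,\dots,a_k]=[[a_1,\dots,a_{k-1}],a_k]$. The isomorphism $F/R\cong\mathrm{UT}_n(\mathbb Z)$ sends $s_i$ to $I+E_{i,i+1}$. *)

theory Defs
  imports "HOL-Algebra.Generated_Groups"
begin

text \<open>A letter (True, x) is the generator x, (False, x) its inverse.\<close>
type_synonym 'a fword = "(bool \<times> 'a) list"

definition push_letter :: "bool \<times> 'a \<Rightarrow> 'a fword \<Rightarrow> 'a fword" where
  "push_letter x acc = (case acc of
       [] \<Rightarrow> [x]
     | y # ys \<Rightarrow> (if snd y = snd x \<and> fst y \<noteq> fst x then ys else x # acc))"

definition fred :: "'a fword \<Rightarrow> 'a fword" where
  "fred w = foldr push_letter w []"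

definition freduced :: "'a fword \<Rightarrow> bool" where
  "freduced w \<longleftrightarrow> fred w = w"

definition free_grp :: "'a set \<Rightarrow> 'a fword monoid" where
  "free_grp S = \<lparr> carrier = {w. freduced w \<and> snd ` set w \<subseteq> S},
                  mult = (\<lambda>u v. fred (u @ v)), one = [] \<rparr>"

definition fgen :: "'a \<Rightarrow> 'a fword" where
  "fgen x = [(True, x)]"

text \<open>Commutator convention: [a,b] = a^-1 b^-1 a b.\<close>
definition gcomm :: "('a, 'b) monoid_scheme \<Rightarrow> 'a \<Rightarrow> 'a \<Rightarrow> 'a" where
  "gcomm G a b = inv\<^bsub>G\<^esub> a \<otimes>\<^bsub>G\<^esub> inv\<^bsub>G\<^esub> b \<otimes>\<^bsub>G\<^esub> a \<otimes>\<^bsub>G\<^esub> b"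

definition normal_closure :: "('a, 'b) monoid_scheme \<Rightarrow> 'a set \<Rightarrow> 'a set" where
  "normal_closure G S =
     generate G {g \<otimes>\<^bsub>G\<^esub> x \<otimes>\<^bsub>G\<^esub> inv\<^bsub>G\<^esub> g | g x. g \<in> carrier G \<and> x \<in> S}"

definition comm_subgrp :: "('a, 'b) monoid_scheme \<Rightarrow> 'a set \<Rightarrow> 'a set \<Rightarrow> 'a set" where
  "comm_subgrp G H K = generate G {gcomm G h k | h k. h \<in> H \<and> k \<in> K}"

definition listprod :: "('a, 'b) monoid_scheme \<Rightarrow> 'a list \<Rightarrow> 'a" where
  "listprod G xs = foldr (\<lambda>x acc. x \<otimes>\<^bsub>G\<^esub> acc) xs \<one>\<^bsub>G\<^esub>"

abbreviation FG :: "nat \<Rightarrow> nat fword monoid" where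
  "FG n \<equiv> free_grp {1..n-1}"

definition ut_relators :: "nat \<Rightarrow> nat fword set" where
  "ut_relators n =
     {gcomm (FG n) (fgen i) (fgen j) | i j. 1 \<le> i \<and> i + 1 < j \<and> j \<le> n - 1}
   \<union> {gcomm (FG n) (gcomm (FG n) (fgen i) (fgen (i+1))) (fgen i) | i. 1 \<le> i \<and> i \<le> n - 2}
   \<union> {gcomm (FG n) (gcomm (FG n) (fgen i) (fgen (i+1))) (fgen (i+1)) | i. 1 \<le> i \<and> i \<le> n - 2}
   \<union> {gcomm (FG n) (gcomm (FG n) (fgen i) (fgen (i+1))) (gcomm (FG n) (fgen (i+1)) (fgen (i+2)))
        | i. 1 \<le> i \<and> i \<le> n - 3}"

definition RN :: "nat \<Rightarrow> nat fword set" where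
  "RN n = normal_closure (FG n) (ut_relators n)"

text \<open>The element of the theorem; products taken in lexicographic order of indices.\<close>
definition the_element ::
  "nat \<Rightarrow> (nat \<Rightarrow> nat \<Rightarrow> int) \<Rightarrow> (nat \<Rightarrow> int) \<Rightarrow> (nat \<Rightarrow> int) \<Rightarrow> (nat \<Rightarrow> int) \<Rightarrow> nat fword" where
  "the_element n a b c d =
     (let G = FG n; s = fgen; cm = gcomm G in
      listprod G [cm (s i) (s j) [^]\<^bsub>G\<^esub> a i j. i \<leftarrow> [1..<n], j \<leftarrow> [i+2..<n]]
      \<otimes>\<^bsub>G\<^esub> listprod G [cm (cm (s i) (s (i+1))) (s i) [^]\<^bsub>G\<^esub> b i. i \<leftarrow> [1..<n-1]]
      \<otimes>\<^bsub>G\<^esub> listprod G [cm (cm (s i) (s (i+1))) (s i \<otimes>\<^bsub>G\<^esub> inv\<^bsub>G\<^esub> s (i+1)) [^]\<^bsub>G\<^esub> c i. i \<leftarrow> [1..<n-1]]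
      \<otimes>\<^bsub>G\<^esub> listprod G [cm (cm (s i) (s (i+1))) (cm (s (i+1)) (s (i+2))) [^]\<^bsub>G\<^esub> d i. i \<leftarrow> [1..<n-2]])"

end

theory Submission imports Defs "HOL-Library.Z2" begin


definition flipl :: "bool \<times> 'a \<Rightarrow> bool \<times> 'a" where "flipl x = (\<not> fst x, snd x)"
definition winv :: "'a fword \<Rightarrow> 'a fword" where "winv w = rev (map flipl w)"
abbreviation act :: "'a fword \<Rightarrow> 'a fword \<Rightarrow> 'a fword" where "act w r \<equiv> foldr push_letter w r"

fun rd :: "'a fword \<Rightarrow> bool" where
  "rd [] = True" | "rd [x] = True"
| "rd (x#y#ys) = (\<not>(snd x = snd y \<and> fst x \<noteq> fst y) \<and> rd (y#ys))"

lemma rd_tl: "rd (x#w) \<Longrightarrow> rd w"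
  by (cases w) auto

lemma rd_push: "rd r \<Longrightarrow> rd (push_letter x r)"
  by (cases r) (auto simp: push_letter_def rd_tl)

lemma rd_act: "rd r \<Longrightarrow> rd (act w r)"
  by (induction w) (auto simp: rd_push)

lemma rd_fred: "rd (fred w)"
  unfolding fred_def by (rule rd_act) simp

lemma fred_rd: "rd w \<Longrightarrow> fred w = w"
proof (induction w)
  case Nil then show ?case by (simp add: fred_def)
next
  case (Cons x w)
  then have "fred w = w" using rd_tl by blast
  then have "fred (x#w) = push_letter x w" by (simp add: fred_def)
  also have "\<dots> = x#w" using Cons.prems by (cases w) (auto simp: push_letter_def)
  finally show ?case .
qed

lemma freduced_rd: "freduced w \<longleftrightarrow> rd w"
  by (metis freduced_def fred_rd rd_fred)

lemma fred_fred: "fred (fred w) = fred w"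
  by (simp add: fred_rd rd_fred)

lemma push_cancel: "rd r \<Longrightarrow> push_letter x (push_letter (flipl x) r) = r"
proof (cases r)
  case Nil then show ?thesis by (auto simp: push_letter_def flipl_def)
next
  case (Cons y ys)
  assume "rd r"
  show ?thesis
  proof (cases "snd y = snd x \<and> fst y = fst x")
    case True
    then have yx: "y = x" by (simp add: prod_eq_iff)
    then have "push_letter (flipl x) r = ys" using Cons by (auto simp: push_letter_def flipl_def)
    moreover have "push_letter x ys = r" using Cons \<open>rd r\<close> yx
      by (cases ys) (auto simp: push_letter_def)
    ultimately show ?thesis by simp
  next
    case False
    then have "push_letter (flipl x) r = flipl x # r" using Cons by (auto simp: push_letter_def flipl_def)
    then show ?thesis by (auto simp: push_letter_def flipl_def)
  qed
qed

lemma act_push: "rd w \<Longrightarrow> rd r \<Longrightarrow> act (push_letter x w) r = push_letter x (act w r)"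
proof (cases w)
  case Nil then show ?thesis by (simp add: push_letter_def)
next
  case (Cons y ys)
  assume rw: "rd w" and rr: "rd r"
  show ?thesis
  proof (cases "snd y = snd x \<and> fst y \<noteq> fst x")
    case True
    then have "y = flipl x" by (simp add: flipl_def prod_eq_iff)
    then have "push_letter x (act w r) = push_letter x (push_letter (flipl x) (act ys r))"
      using Cons by simp
    also have "\<dots> = act ys r" by (rule push_cancel) (use rr rd_act in auto)
    finally show ?thesis using Cons True by (simp add: push_letter_def)
  next
    case False
    then have "push_letter x w = x # w" using Cons by (simp add: push_letter_def)
    then show ?thesis by simp
  qed
qed

lemma act_fred: "rd r \<Longrightarrow> act (fred z) r = act z r"
proof (induction z)
  case Nil then show ?case by (simp add: fred_def)
next
  case (Cons x z)
  have "fred (x#z) = push_letter x (fred z)" by (simp add: fred_def)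
  then have "act (fred (x#z)) r = push_letter x (act (fred z) r)"
    using act_push[OF rd_fred Cons.prems] by simp
  then show ?case using Cons by simp
qed

lemma flipl_flipl[simp]: "flipl (flipl x) = x" by (simp add: flipl_def)
lemma winv_winv[simp]: "winv (winv w) = w" by (simp add: winv_def rev_map comp_def)

lemma act_winv: "rd r \<Longrightarrow> act w (act (winv w) r) = r"
proof (induction w arbitrary: r)
  case Nil then show ?case by (simp add: winv_def)
next
  case (Cons x w)
  have "act (x#w) (act (winv (x#w)) r) = push_letter x (act w (act (winv w) (push_letter (flipl x) r)))"
    by (simp add: winv_def)
  also have "\<dots> = push_letter x (push_letter (flipl x) r)"
    using Cons.IH rd_push Cons.prems by metis
  also have "\<dots> = r" using push_cancel Cons.prems by metis
  finally show ?case .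
qed

lemma fred_app: "fred (u @ v) = act u (fred v)" by (simp add: fred_def)

lemma set_push: "set (push_letter x r) \<subseteq> insert x (set r)"
  by (cases r) (auto simp: push_letter_def)
lemma set_act: "set (act w r) \<subseteq> set w \<union> set r"
  by (induction w) (use set_push in fastforce)+
lemma set_fred: "set (fred w) \<subseteq> set w"
  using set_act[of w "[]"] by (simp add: fred_def)

lemma free_grp_group: "group (free_grp S)"
proof (rule groupI)
  fix x y assume "x \<in> carrier (free_grp S)" "y \<in> carrier (free_grp S)"
  then show "x \<otimes>\<^bsub>free_grp S\<^esub> y \<in> carrier (free_grp S)"
    using set_fred[of "x@y"] by (fastforce simp: free_grp_def freduced_rd rd_fred)
next
  show "\<one>\<^bsub>free_grp S\<^esub> \<in> carrier (free_grp S)" by (simp add: free_grp_def freduced_rd)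
next
  fix x y z
  show "x \<otimes>\<^bsub>free_grp S\<^esub> y \<otimes>\<^bsub>free_grp S\<^esub> z = x \<otimes>\<^bsub>free_grp S\<^esub> (y \<otimes>\<^bsub>free_grp S\<^esub> z)"
  proof -
    have "fred (fred (x @ y) @ z) = act (x @ y) (fred z)"
      by (simp only: fred_app[of "fred (x@y)"] act_fred rd_fred)
    moreover have "fred (x @ fred (y @ z)) = act x (fred (y@z))"
      by (simp only: fred_app[of x] fred_fred)
    ultimately show ?thesis by (simp add: free_grp_def fred_app)
  qed
next
  fix x assume "x \<in> carrier (free_grp S)"
  then show "\<one>\<^bsub>free_grp S\<^esub> \<otimes>\<^bsub>free_grp S\<^esub> x = x"
    by (simp add: free_grp_def freduced_def)
next
  fix x assume x: "x \<in> carrier (free_grp S)"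
  have "fred (winv x) \<in> carrier (free_grp S)"
    using x set_fred[of "winv x"] by (fastforce simp: free_grp_def freduced_rd rd_fred winv_def flipl_def)
  moreover have "fred (fred (winv x) @ x) = []"
  proof -
    have "fred (fred (winv x) @ x) = act (winv x) (fred x)" by (simp add: fred_app act_fred rd_fred)
    also have "\<dots> = act (winv x) (act (winv (winv x)) [])" by (simp add: fred_def)
    also have "\<dots> = []" by (rule act_winv) simp
    finally show ?thesis .
  qed
  ultimately show "\<exists>y\<in>carrier (free_grp S). y \<otimes>\<^bsub>free_grp S\<^esub> x = \<one>\<^bsub>free_grp S\<^esub>"
    by (auto simp: free_grp_def)
qed

lemma fgen_carrier: "i \<in> S \<Longrightarrow> fgen i \<in> carrier (free_grp S)"
  by (simp add: fgen_def free_grp_def freduced_rd)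

definition evl :: "('e,'m) monoid_scheme \<Rightarrow> (nat \<Rightarrow> 'e) \<Rightarrow> bool \<times> nat \<Rightarrow> 'e" where
  "evl E g x = (if fst x then g (snd x) else inv\<^bsub>E\<^esub> (g (snd x)))"
definition ev :: "('e,'m) monoid_scheme \<Rightarrow> (nat \<Rightarrow> 'e) \<Rightarrow> nat fword \<Rightarrow> 'e" where
  "ev E g w = foldr (\<lambda>x acc. evl E g x \<otimes>\<^bsub>E\<^esub> acc) w \<one>\<^bsub>E\<^esub>"

lemma lc2: "[F i j. i \<leftarrow> xs, j \<leftarrow> ys i] = map (\<lambda>p. F (fst p) (snd p)) [(i,j). i \<leftarrow> xs, j \<leftarrow> ys i]"
  by (induction xs) auto

definition pairs :: "nat \<Rightarrow> (nat \<times> nat) list" where "pairs n = [(i,j). i \<leftarrow> [1..<n], j \<leftarrow> [i+2..<n]]"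

locale det = group E for E :: "('e,'m) monoid_scheme" (structure) +
  fixes g :: "nat \<Rightarrow> 'e"
  assumes gc[simp]: "g i \<in> carrier E"
begin

lemma evl_closed[simp]: "evl E g x \<in> carrier E" by (simp add: evl_def)
lemma ev_closed[simp]: "ev E g w \<in> carrier E" by (induction w) (auto simp: ev_def)
lemma ev_Nil[simp]: "ev E g [] = \<one>" by (simp add: ev_def)
lemma ev_Cons[simp]: "ev E g (x#w) = evl E g x \<otimes> ev E g w" by (simp add: ev_def)
lemma ev_append: "ev E g (u@v) = ev E g u \<otimes> ev E g v"
  by (induction u) (auto simp: m_assoc)

lemma evl_flip: "evl E g x \<otimes> evl E g (flipl x) = \<one>"
  by (auto simp: evl_def flipl_def)

lemma ev_push: "ev E g (push_letter x r) = evl E g x \<otimes> ev E g r"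
proof (cases r)
  case (Cons y ys)
  show ?thesis
  proof (cases "snd y = snd x \<and> fst y \<noteq> fst x")
    case True
    then have "y = flipl x" by (simp add: flipl_def prod_eq_iff)
    then have "evl E g x \<otimes> ev E g r = (evl E g x \<otimes> evl E g (flipl x)) \<otimes> ev E g ys"
      using Cons by (simp add: m_assoc)
    then show ?thesis using Cons True evl_flip by (simp add: push_letter_def)
  qed (use Cons in \<open>auto simp: push_letter_def\<close>)
qed (simp add: push_letter_def)

lemma ev_act: "ev E g (act w r) = ev E g w \<otimes> ev E g r"
  by (induction w) (auto simp: ev_push m_assoc)

lemma ev_fred: "ev E g (fred w) = ev E g w"
  using ev_act[of w "[]"] by (simp add: fred_def)

lemma ev_hom: "ev E g \<in> hom (free_grp S) E"
  by (rule homI) (auto simp: free_grp_def ev_fred ev_append)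

lemma ev_ghom: "group_hom (free_grp S) E (ev E g)"
  by (simp add: group_hom_def group_hom_axioms_def free_grp_group ev_hom is_group)

lemma ev_fgen[simp]: "ev E g (fgen i) = g i" by (simp add: fgen_def evl_def)

lemma comm_ev: assumes "e \<in> carrier E" "\<And>i. e \<otimes> g i = g i \<otimes> e"
  shows "e \<otimes> ev E g w = ev E g w \<otimes> e"
proof (induction w)
  case Nil then show ?case using assms by simp
next
  case (Cons x w)
  have "e \<otimes> evl E g x = evl E g x \<otimes> e"
  proof (cases "fst x")
    case False
    have "e \<otimes> inv g (snd x) = inv g (snd x) \<otimes> e"
      using assms(2)[of "snd x"] assms(1)
      by (metis gc inv_closed inv_solve_left' m_assoc m_closed r_inv r_one)
    then show ?thesis using False by (simp add: evl_def)
  qed (use assms in \<open>simp add: evl_def\<close>)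
  then show ?case using Cons assms(1)
    by (simp add: m_assoc[symmetric]) (simp add: m_assoc)
qed


lemma gcomm_carrier: "a \<in> carrier (free_grp S) \<Longrightarrow> b \<in> carrier (free_grp S) \<Longrightarrow> gcomm (free_grp S) a b \<in> carrier (free_grp S)"
  unfolding gcomm_def using free_grp_group[of S] by (intro group.inv_closed monoid.m_closed group.is_monoid)

lemma relators_carrier: "ut_relators n \<subseteq> carrier (FG n)"
  unfolding ut_relators_def by (auto intro!: gcomm_carrier fgen_carrier)

lemma kill_gen:
  assumes cen: "\<And>r i. r \<in> Rel \<Longrightarrow> ev E g r \<otimes> g i = g i \<otimes> ev E g r"
    and Relc: "Rel \<subseteq> carrier (free_grp S)"
    and x: "x \<in> comm_subgrp (free_grp S) (normal_closure (free_grp S) Rel) (carrier (free_grp S))"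
  shows "ev E g x = \<one>"
proof -
  interpret F: group "free_grp S" by (rule free_grp_group)
  interpret h: group_hom "free_grp S" E "ev E g" by (rule ev_ghom)
  define Z where "Z = {e \<in> carrier E. \<forall>w. e \<otimes> ev E g w = ev E g w \<otimes> e}"
  have Zr: "ev E g r \<in> Z" if "r \<in> Rel" for r
    using comm_ev[of "ev E g r"] cen[OF that] by (simp add: Z_def)
  define S' where "S' = {a \<otimes>\<^bsub>free_grp S\<^esub> r \<otimes>\<^bsub>free_grp S\<^esub> inv\<^bsub>free_grp S\<^esub> a | a r. a \<in> carrier (free_grp S) \<and> r \<in> Rel}"
  have S'c: "S' \<subseteq> carrier (free_grp S)" unfolding S'_def
    using Relc by (blast intro: F.m_closed F.inv_closed)
  have S'Z: "ev E g y \<in> Z" if yS: "y \<in> S'" for y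
  proof -
    obtain a r where y: "y = a \<otimes>\<^bsub>free_grp S\<^esub> r \<otimes>\<^bsub>free_grp S\<^esub> inv\<^bsub>free_grp S\<^esub> a" and a: "a \<in> carrier (free_grp S)"
      and r: "r \<in> Rel" using yS unfolding S'_def by blast
    have rc: "r \<in> carrier (free_grp S)" using r Relc by auto
    have "ev E g y = ev E g a \<otimes> ev E g r \<otimes> inv ev E g a" using y a rc by simp
    also have "\<dots> = ev E g r \<otimes> ev E g a \<otimes> inv ev E g a" using Zr[OF r] by (simp add: Z_def)
    also have "\<dots> = ev E g r" by (simp add: m_assoc)
    finally show ?thesis using Zr[OF r] by simp
  qed
  have Zinv: "inv e \<in> Z" if "e \<in> Z" for e
  proof -
    have "\<And>w. inv e \<otimes> ev E g w = ev E g w \<otimes> inv e"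
      using that by (simp add: Z_def) (metis ev_closed inv_closed inv_solve_left' m_assoc m_closed r_inv r_one)
    then show ?thesis using that by (simp add: Z_def)
  qed
  have Zmul: "e \<otimes> f \<in> Z" if "e \<in> Z" "f \<in> Z" for e f
    using that by (auto simp: Z_def) (metis m_assoc ev_closed)
  have RZ: "ev E g y \<in> Z" if "y \<in> normal_closure (free_grp S) Rel" for y
    using that unfolding normal_closure_def S'_def[symmetric]
  proof (induction rule: generate.induct)
    case one then show ?case by (simp add: Z_def)
  next
    case (incl h) then show ?case by (rule S'Z)
  next
    case (inv h) then show ?case using S'c Zinv S'Z by auto
  next
    case (eng h1 h2)
    then have "h1 \<in> carrier (free_grp S)" "h2 \<in> carrier (free_grp S)"
      using F.generate_in_carrier[OF S'c] by auto
    then show ?case using eng Zmul by simp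
  qed
  have RNc: "normal_closure (free_grp S) Rel \<subseteq> carrier (free_grp S)"
    unfolding normal_closure_def S'_def[symmetric] using F.generate_in_carrier[OF S'c] by auto
  define T where "T = {gcomm (free_grp S) h k | h k. h \<in> normal_closure (free_grp S) Rel \<and> k \<in> carrier (free_grp S)}"
  have Tc: "T \<subseteq> carrier (free_grp S)" unfolding T_def gcomm_def
    using RNc by (blast intro: F.m_closed F.inv_closed)
  have T1: "ev E g y = \<one>" if yT: "y \<in> T" for y
  proof -
    obtain h k where y: "y = gcomm (free_grp S) h k" and h: "h \<in> normal_closure (free_grp S) Rel" and k: "k \<in> carrier (free_grp S)"
      using yT unfolding T_def by blast
    have hc: "h \<in> carrier (free_grp S)" using h RNc by auto
    have z: "ev E g h \<in> Z" using RZ[OF h] .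
    have "ev E g y = inv ev E g h \<otimes> inv ev E g k \<otimes> ev E g h \<otimes> ev E g k"
      using y hc k by (simp add: gcomm_def)
    also have "\<dots> = inv ev E g h \<otimes> (inv ev E g k \<otimes> ev E g h) \<otimes> ev E g k"
      by (simp add: m_assoc)
    also have "inv ev E g k \<otimes> ev E g h = ev E g h \<otimes> inv ev E g k"
    proof -
      have "ev E g h \<otimes> ev E g k = ev E g k \<otimes> ev E g h" using z by (simp add: Z_def)
      then show ?thesis
        by (metis ev_closed inv_closed inv_solve_left' m_assoc m_closed r_inv r_one)
    qed
    also have "inv ev E g h \<otimes> (ev E g h \<otimes> inv ev E g k) \<otimes> ev E g k = \<one>"
      by (simp add: m_assoc[symmetric])
    finally show ?thesis .
  qed
  show ?thesis using x unfolding comm_subgrp_def T_def[symmetric]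
  proof (induction rule: generate.induct)
    case one then show ?case by simp
  next
    case (incl h) then show ?case by (rule T1)
  next
    case (inv h) then show ?case using Tc T1 by auto
  next
    case (eng h1 h2)
    then have "h1 \<in> carrier (free_grp S)" "h2 \<in> carrier (free_grp S)"
      using F.generate_in_carrier[OF Tc] by auto
    then show ?case using eng by simp
  qed
qed

lemma kill:
  assumes cen: "\<And>r i. r \<in> ut_relators n \<Longrightarrow> ev E g r \<otimes> g i = g i \<otimes> ev E g r"
    and x: "x \<in> comm_subgrp (FG n) (RN n) (carrier (FG n))"
  shows "ev E g x = \<one>"
  using kill_gen[OF cen relators_carrier] x unfolding RN_def by blast


lemma ev_mult: "a \<in> carrier (free_grp S) \<Longrightarrow> b \<in> carrier (free_grp S) \<Longrightarrow> ev E g (a \<otimes>\<^bsub>free_grp S\<^esub> b) = ev E g a \<otimes> ev E g b"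
  using group_hom.hom_mult[OF ev_ghom] by blast
lemma ev_inv: "a \<in> carrier (free_grp S) \<Longrightarrow> ev E g (inv\<^bsub>free_grp S\<^esub> a) = inv ev E g a"
  using group_hom.hom_inv[OF ev_ghom] by blast
lemma ev_pow: "a \<in> carrier (free_grp S) \<Longrightarrow> ev E g (a [^]\<^bsub>free_grp S\<^esub> (k::int)) = ev E g a [^] k"
  using group_hom.hom_int_pow[OF ev_ghom] by blast
lemma ev_gcomm: "a \<in> carrier (free_grp S) \<Longrightarrow> b \<in> carrier (free_grp S) \<Longrightarrow>
   ev E g (gcomm (free_grp S) a b) = gcomm E (ev E g a) (ev E g b)"
  using free_grp_group[of S]
  by (simp add: gcomm_def ev_mult ev_inv group.inv_closed monoid.m_closed group.is_monoid)

lemma listprod_closed_F: "set xs \<subseteq> carrier (free_grp S) \<Longrightarrow> listprod (free_grp S) xs \<in> carrier (free_grp S)"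
  using free_grp_group[of S]
  by (induction xs) (auto simp: listprod_def group.is_monoid monoid.m_closed monoid.one_closed)

lemma ev_listprod_map:
  assumes "\<And>x. x \<in> set xs \<Longrightarrow> F x \<in> carrier (free_grp S) \<and> ev E g (F x) = G x"
  shows "ev E g (listprod (free_grp S) (map F xs)) = listprod E (map G xs)"
  using assms
proof (induction xs)
  case Nil then show ?case by (simp add: listprod_def free_grp_def)
next
  case (Cons x xs)
  have c: "listprod (free_grp S) (map F xs) \<in> carrier (free_grp S)"
    using Cons.prems by (intro listprod_closed_F) auto
  have "ev E g (listprod (free_grp S) (map F (x#xs))) = ev E g (F x) \<otimes> ev E g (listprod (free_grp S) (map F xs))"
    using ev_mult[OF _ c, of "F x"] Cons.prems by (simp add: listprod_def)
  then show ?case using Cons by (simp add: listprod_def)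
qed



lemma ev_elem_gen:
  assumes S: "S = {1..n-1}"
  shows "ev E g (the_element n a b c d) =
    listprod E (map (\<lambda>p. gcomm E (g (fst p)) (g (snd p)) [^] a (fst p) (snd p)) (pairs n))
    \<otimes> listprod E (map (\<lambda>i. gcomm E (gcomm E (g i) (g (i+1))) (g i) [^] b i) [1..<n-1])
    \<otimes> listprod E (map (\<lambda>i. gcomm E (gcomm E (g i) (g (i+1))) (g i \<otimes> inv g (i+1)) [^] c i) [1..<n-1])
    \<otimes> listprod E (map (\<lambda>i. gcomm E (gcomm E (g i) (g (i+1))) (gcomm E (g (i+1)) (g (i+2))) [^] d i) [1..<n-2])"
proof -
  interpret F: group "free_grp S" by (rule free_grp_group)
  have fg: "fgen i \<in> carrier (free_grp S)" if "1 \<le> i" "i < n" for i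
    using that S by (intro fgen_carrier) auto
  have cm: "gcomm (free_grp S) x y \<in> carrier (free_grp S)" if "x \<in> carrier (free_grp S)" "y \<in> carrier (free_grp S)" for x y
    using that by (rule gcomm_carrier)
  define L1 where "L1 = listprod (free_grp S) (map (\<lambda>p. gcomm (free_grp S) (fgen (fst p)) (fgen (snd p)) [^]\<^bsub>free_grp S\<^esub> a (fst p) (snd p)) (pairs n))"
  define L2 where "L2 = listprod (free_grp S) (map (\<lambda>i. gcomm (free_grp S) (gcomm (free_grp S) (fgen i) (fgen (i+1))) (fgen i) [^]\<^bsub>free_grp S\<^esub> b i) [1..<n-1])"
  define L3 where "L3 = listprod (free_grp S) (map (\<lambda>i. gcomm (free_grp S) (gcomm (free_grp S) (fgen i) (fgen (i+1))) (fgen i \<otimes>\<^bsub>free_grp S\<^esub> inv\<^bsub>free_grp S\<^esub> fgen (i+1)) [^]\<^bsub>free_grp S\<^esub> c i) [1..<n-1])"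
  define L4 where "L4 = listprod (free_grp S) (map (\<lambda>i. gcomm (free_grp S) (gcomm (free_grp S) (fgen i) (fgen (i+1))) (gcomm (free_grp S) (fgen (i+1)) (fgen (i+2))) [^]\<^bsub>free_grp S\<^esub> d i) [1..<n-2])"
  have el: "the_element n a b c d = L1 \<otimes>\<^bsub>free_grp S\<^esub> L2 \<otimes>\<^bsub>free_grp S\<^esub> L3 \<otimes>\<^bsub>free_grp S\<^esub> L4"
    unfolding the_element_def Let_def L1_def L2_def L3_def L4_def pairs_def S
    by (subst lc2) simp
  have e1: "ev E g L1 = listprod E (map (\<lambda>p. gcomm E (g (fst p)) (g (snd p)) [^] a (fst p) (snd p)) (pairs n))"
    "L1 \<in> carrier (free_grp S)"
  proof -
    have h: "\<And>p. p \<in> set (pairs n) \<Longrightarrow> 1 \<le> fst p \<and> fst p < n \<and> 1 \<le> snd p \<and> snd p < n"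
      by (auto simp: pairs_def)
    show "ev E g L1 = listprod E (map (\<lambda>p. gcomm E (g (fst p)) (g (snd p)) [^] a (fst p) (snd p)) (pairs n))"
      unfolding L1_def
      by (rule ev_listprod_map) (use h fg in \<open>simp add: ev_pow ev_gcomm cm\<close>)
    show "L1 \<in> carrier (free_grp S)" unfolding L1_def
      by (rule listprod_closed_F) (use h fg in \<open>auto intro!: F.int_pow_closed cm\<close>)
  qed
  have e2: "ev E g L2 = listprod E (map (\<lambda>i. gcomm E (gcomm E (g i) (g (i+1))) (g i) [^] b i) [1..<n-1])"
    "L2 \<in> carrier (free_grp S)"
  proof -
    have h: "\<And>i. i \<in> set [1..<n-1] \<Longrightarrow> 1 \<le> i \<and> i < n \<and> 1 \<le> i+1 \<and> i+1 < n" by auto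
    show "ev E g L2 = listprod E (map (\<lambda>i. gcomm E (gcomm E (g i) (g (i+1))) (g i) [^] b i) [1..<n-1])"
      unfolding L2_def
      by (rule ev_listprod_map) (use h fg in \<open>simp add: ev_pow ev_gcomm cm\<close>)
    show "L2 \<in> carrier (free_grp S)" unfolding L2_def
      by (rule listprod_closed_F) (use h fg in \<open>auto intro!: F.int_pow_closed cm\<close>)
  qed
  have e3: "ev E g L3 = listprod E (map (\<lambda>i. gcomm E (gcomm E (g i) (g (i+1))) (g i \<otimes> inv g (i+1)) [^] c i) [1..<n-1])"
    "L3 \<in> carrier (free_grp S)"
  proof -
    have h: "\<And>i. i \<in> set [1..<n-1] \<Longrightarrow> 1 \<le> i \<and> i < n \<and> 1 \<le> i+1 \<and> i+1 < n" by auto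
    show "ev E g L3 = listprod E (map (\<lambda>i. gcomm E (gcomm E (g i) (g (i+1))) (g i \<otimes> inv g (i+1)) [^] c i) [1..<n-1])"
      unfolding L3_def
      by (rule ev_listprod_map) (use h fg in \<open>simp add: ev_pow ev_gcomm cm ev_mult ev_inv\<close>)
    show "L3 \<in> carrier (free_grp S)" unfolding L3_def
      by (rule listprod_closed_F) (use h fg in \<open>auto intro!: F.int_pow_closed cm\<close>)
  qed
  have e4: "ev E g L4 = listprod E (map (\<lambda>i. gcomm E (gcomm E (g i) (g (i+1))) (gcomm E (g (i+1)) (g (i+2))) [^] d i) [1..<n-2])"
    "L4 \<in> carrier (free_grp S)"
  proof -
    have h: "\<And>i. i \<in> set [1..<n-2] \<Longrightarrow> 1 \<le> i \<and> i < n \<and> 1 \<le> i+1 \<and> i+1 < n \<and> 1 \<le> i+2 \<and> i+2 < n" by auto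
    show "ev E g L4 = listprod E (map (\<lambda>i. gcomm E (gcomm E (g i) (g (i+1))) (gcomm E (g (i+1)) (g (i+2))) [^] d i) [1..<n-2])"
      unfolding L4_def
      by (rule ev_listprod_map) (use h fg in \<open>simp add: ev_pow ev_gcomm cm\<close>)
    show "L4 \<in> carrier (free_grp S)" unfolding L4_def
      by (rule listprod_closed_F) (use h fg in \<open>auto intro!: F.int_pow_closed cm\<close>)
  qed
  show ?thesis unfolding el using e1 e2 e3 e4 by (simp add: ev_mult)
qed

lemma ev_elem: "ev E g (the_element n a b c d) =
    listprod E (map (\<lambda>p. gcomm E (g (fst p)) (g (snd p)) [^] a (fst p) (snd p)) (pairs n))
    \<otimes> listprod E (map (\<lambda>i. gcomm E (gcomm E (g i) (g (i+1))) (g i) [^] b i) [1..<n-1])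
    \<otimes> listprod E (map (\<lambda>i. gcomm E (gcomm E (g i) (g (i+1))) (g i \<otimes> inv g (i+1)) [^] c i) [1..<n-1])
    \<otimes> listprod E (map (\<lambda>i. gcomm E (gcomm E (g i) (g (i+1))) (gcomm E (g (i+1)) (g (i+2))) [^] d i) [1..<n-2])"
  by (rule ev_elem_gen) simp


lemma rel_cases:
  assumes "r \<in> ut_relators n"
  shows "(\<exists>i j. 1 \<le> i \<and> i + 1 < j \<and> j \<le> n - 1 \<and> ev E g r = gcomm E (g i) (g j))
    \<or> (\<exists>i. 1 \<le> i \<and> i \<le> n - 2 \<and> (ev E g r = gcomm E (gcomm E (g i) (g (i+1))) (g i)
           \<or> ev E g r = gcomm E (gcomm E (g i) (g (i+1))) (g (i+1))))
    \<or> (\<exists>i. 1 \<le> i \<and> i \<le> n - 3 \<and> ev E g r = gcomm E (gcomm E (g i) (g (i+1))) (gcomm E (g (i+1)) (g (i+2))))"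
proof -
  have fc: "\<And>i. 1 \<le> i \<Longrightarrow> i \<le> n - 1 \<Longrightarrow> fgen i \<in> carrier (FG n)" by (rule fgen_carrier) simp
  note gc = gcomm_carrier[of _ "{1..n-1}"]
  note eg = ev_gcomm[of _ "{1..n-1}"]
  from assms[unfolded ut_relators_def] show ?thesis
  proof (elim UnE)
    assume "r \<in> {gcomm (FG n) (fgen i) (fgen j) | i j. 1 \<le> i \<and> i + 1 < j \<and> j \<le> n - 1}"
    then obtain i j where "r = gcomm (FG n) (fgen i) (fgen j)" "1 \<le> i" "i + 1 < j" "j \<le> n - 1" by blast
    then have "1 \<le> i \<and> i + 1 < j \<and> j \<le> n - 1 \<and> ev E g r = gcomm E (g i) (g j)"
      using eg[OF fc fc, of i j] by simp
    then show ?thesis by blast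
  next
    assume "r \<in> {gcomm (FG n) (gcomm (FG n) (fgen i) (fgen (i+1))) (fgen i) | i. 1 \<le> i \<and> i \<le> n - 2}"
    then obtain i where "r = gcomm (FG n) (gcomm (FG n) (fgen i) (fgen (i+1))) (fgen i)" "1 \<le> i" "i \<le> n - 2" by blast
    then have "1 \<le> i \<and> i \<le> n - 2 \<and> ev E g r = gcomm E (gcomm E (g i) (g (i+1))) (g i)"
      using eg[OF gc[OF fc fc] fc, of i "i+1" i] eg[OF fc fc, of i "i+1"] by simp
    then show ?thesis by blast
  next
    assume "r \<in> {gcomm (FG n) (gcomm (FG n) (fgen i) (fgen (i+1))) (fgen (i+1)) | i. 1 \<le> i \<and> i \<le> n - 2}"
    then obtain i where "r = gcomm (FG n) (gcomm (FG n) (fgen i) (fgen (i+1))) (fgen (i+1))" "1 \<le> i" "i \<le> n - 2" by blast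
    then have "1 \<le> i \<and> i \<le> n - 2 \<and> ev E g r = gcomm E (gcomm E (g i) (g (i+1))) (g (i+1))"
      using eg[OF gc[OF fc fc] fc, of i "i+1" "i+1"] eg[OF fc fc, of i "i+1"] by simp
    then show ?thesis by blast
  next
    assume "r \<in> {gcomm (FG n) (gcomm (FG n) (fgen i) (fgen (i+1))) (gcomm (FG n) (fgen (i+1)) (fgen (i+2))) | i. 1 \<le> i \<and> i \<le> n - 3}"
    then obtain i where "r = gcomm (FG n) (gcomm (FG n) (fgen i) (fgen (i+1))) (gcomm (FG n) (fgen (i+1)) (fgen (i+2)))" "1 \<le> i" "i \<le> n - 3" by blast
    then have "1 \<le> i \<and> i \<le> n - 3 \<and> ev E g r = gcomm E (gcomm E (g i) (g (i+1))) (gcomm E (g (i+1)) (g (i+2)))"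
      using eg[OF gc[OF fc fc] gc[OF fc fc], of i "i+1" "i+1" "i+2"] eg[OF fc fc, of i "i+1"] eg[OF fc fc, of "i+1" "i+2"] by simp
    then show ?thesis by blast
  qed
qed

end




datatype 'r ut = U (e12: 'r) (e13: 'r) (e14: 'r) (e15: 'r) (e23: 'r) (e24: 'r) (e25: 'r) (e34: 'r) (e35: 'r) (e45: 'r)

definition umul :: "'r::comm_ring_1 ut \<Rightarrow> 'r ut \<Rightarrow> 'r ut" where
  "umul a b = U (e12 a + e12 b) (e13 a + e13 b + e12 a * e23 b)
     (e14 a + e14 b + e12 a * e24 b + e13 a * e34 b)
     (e15 a + e15 b + e12 a * e25 b + e13 a * e35 b + e14 a * e45 b)
     (e23 a + e23 b) (e24 a + e24 b + e23 a * e34 b)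
     (e25 a + e25 b + e23 a * e35 b + e24 a * e45 b)
     (e34 a + e34 b) (e35 a + e35 b + e34 a * e45 b) (e45 a + e45 b)"

definition uone :: "'r::comm_ring_1 ut" where "uone = U 0 0 0 0 0 0 0 0 0 0"

definition uinv :: "'r::comm_ring_1 ut \<Rightarrow> 'r ut" where
  "uinv a = (let y12 = - e12 a; y23 = - e23 a; y34 = - e34 a; y45 = - e45 a;
     y13 = - e13 a - y12 * e23 a; y24 = - e24 a - y23 * e34 a; y35 = - e35 a - y34 * e45 a;
     y14 = - e14 a - y12 * e24 a - y13 * e34 a; y25 = - e25 a - y23 * e35 a - y24 * e45 a;
     y15 = - e15 a - y12 * e25 a - y13 * e35 a - y14 * e45 a
   in U y12 y13 y14 y15 y23 y24 y25 y34 y35 y45)"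

definition UG :: "'r::comm_ring_1 ut monoid" where
  "UG = \<lparr>carrier = UNIV, mult = umul, one = uone\<rparr>"

lemma UG_simps[simp]: "carrier UG = UNIV" "mult UG = umul" "one UG = uone"
  by (simp_all add: UG_def)

lemma UG_group: "group (UG :: 'r::comm_ring_1 ut monoid)"
proof (rule groupI)
  fix x y z :: "'r ut"
  show "x \<otimes>\<^bsub>UG\<^esub> y \<otimes>\<^bsub>UG\<^esub> z = x \<otimes>\<^bsub>UG\<^esub> (y \<otimes>\<^bsub>UG\<^esub> z)"
    by (simp add: umul_def algebra_simps)
next
  fix x :: "'r ut"
  show "\<one>\<^bsub>UG\<^esub> \<otimes>\<^bsub>UG\<^esub> x = x" by (cases x) (simp add: umul_def uone_def)
next
  fix x :: "'r ut"
  show "\<exists>y\<in>carrier UG. y \<otimes>\<^bsub>UG\<^esub> x = \<one>\<^bsub>UG\<^esub>"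
    by (rule bexI[of _ "uinv x"]) (simp_all add: umul_def uone_def uinv_def Let_def algebra_simps)
qed simp_all

lemma uinv_UG: "inv\<^bsub>(UG :: 'r::comm_ring_1 ut monoid)\<^esub> x = uinv x"
  by (rule group.inv_equality[OF UG_group]) (simp_all add: umul_def uone_def uinv_def Let_def algebra_simps)

lemma gcomm_UG: "gcomm UG a b = umul (umul (umul (uinv a) (uinv b)) a) b"
  by (simp add: gcomm_def uinv_UG)

definition t14 :: "'r::comm_ring_1 \<Rightarrow> 'r ut" where "t14 k = U 0 0 k 0 0 0 0 0 0 0"

lemma t14_nat_pow: "(t14 k :: 'r::comm_ring_1 ut) [^]\<^bsub>UG\<^esub> (m::nat) = t14 (of_nat m * k)"
  by (induction m) (simp_all add: t14_def uone_def umul_def algebra_simps)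

lemma t14_int_pow: "(t14 k :: 'r::comm_ring_1 ut) [^]\<^bsub>UG\<^esub> (m::int) = t14 (of_int m * k)"
  by (simp add: int_pow_def2 t14_nat_pow uinv_UG) (simp add: uinv_def t14_def Let_def)



lemma (in group) gcomm_one_l[simp]: "p \<in> carrier G \<Longrightarrow> gcomm G \<one> p = \<one>"
  by (simp add: gcomm_def m_assoc)
lemma (in group) gcomm_one_r[simp]: "p \<in> carrier G \<Longrightarrow> gcomm G p \<one> = \<one>"
  by (simp add: gcomm_def)
lemma (in group) gcomm_commute: "p \<in> carrier G \<Longrightarrow> q \<in> carrier G \<Longrightarrow> p \<otimes> q = q \<otimes> p \<Longrightarrow> gcomm G p q = \<one>"
proof -
  assume a: "p \<in> carrier G" "q \<in> carrier G" "p \<otimes> q = q \<otimes> p"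
  have "gcomm G p q = inv p \<otimes> (inv q \<otimes> (p \<otimes> q))" using a(1,2) by (simp add: gcomm_def m_assoc)
  also have "\<dots> = inv p \<otimes> (inv q \<otimes> (q \<otimes> p))" by (simp only: a(3))
  also have "\<dots> = inv p \<otimes> ((inv q \<otimes> q) \<otimes> p)" using a(1,2) by (simp only: m_assoc inv_closed)
  also have "\<dots> = \<one>" using a(1,2) by simp
  finally show ?thesis .
qed
lemma (in group) listprod_ones: "(\<And>x. x \<in> set xs \<Longrightarrow> x = \<one>) \<Longrightarrow> listprod G xs = \<one>"
proof (induction xs)
  case Nil then show ?case by (simp add: listprod_def)
next
  case (Cons y ys)
  have "y = \<one>" using Cons.prems by simp
  moreover have "listprod G ys = \<one>" using Cons by simp
  ultimately show ?case by (simp add: listprod_def)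
qed

lemma (in group) listprod_single:
  assumes "distinct xs" "x0 \<in> set xs" "\<forall>x\<in>set xs. x \<noteq> x0 \<longrightarrow> f x = \<one>" "f x0 \<in> carrier G"
  shows "listprod G (map f xs) = f x0"
  using assms
proof (induction xs)
  case Nil then show ?case by simp
next
  case (Cons y ys)
  show ?case
  proof (cases "y = x0")
    case True
    then have "x0 \<notin> set ys" using Cons.prems(1) by auto
    then have "listprod G (map f ys) = \<one>"
      using Cons.prems(3) by (intro listprod_ones) auto
    then show ?thesis using True Cons.prems(4) by (simp add: listprod_def)
  next
    case False
    then have "listprod G (map f ys) = f x0" using Cons by auto
    moreover have "f y = \<one>" using False Cons.prems(3) by auto
    ultimately show ?thesis using Cons.prems(4) by (simp add: listprod_def)
  qed
qed
lemma UG_uone: "\<one>\<^bsub>UG\<^esub> = uone" by simp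

lemma gU1[simp]: "gcomm UG uone p = uone" "gcomm UG p uone = uone"
  using group.gcomm_one_l[OF UG_group, of p] group.gcomm_one_r[OF UG_group, of p] by simp_all

lemma t14_comm: "e45 p = 0 \<Longrightarrow> umul (t14 k) p = umul p (t14 k)"
  by (cases p) (simp add: t14_def umul_def algebra_simps)

lemma gcomm_t14: "e45 p = 0 \<Longrightarrow> gcomm UG (t14 k) p = uone" "e45 p = 0 \<Longrightarrow> gcomm UG p (t14 k) = uone"
  using group.gcomm_commute[OF UG_group, of "t14 k" p] group.gcomm_commute[OF UG_group, of p "t14 k"]
    t14_comm[of p k] by simp_all

lemma t14_uone: "t14 0 = uone" by (simp add: t14_def uone_def)
lemma t14_eq_uone: "t14 k = uone \<longleftrightarrow> k = 0" by (simp add: t14_def uone_def)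

definition "cA = (U 1 0 0 0 0 0 0 0 0 0 :: int ut)"
definition "cB = (U 0 0 0 0 0 1 0 0 0 0 :: int ut)"
definition "cX = (U 1 0 0 0 0 0 0 1 0 0 :: int ut)"
definition "cY = (U 0 0 0 0 1 0 0 0 0 0 :: int ut)"
definition "dX = (U 1 0 0 0 0 0 0 1 0 0 :: bit ut)"
definition "dY = (U 0 0 0 1 1 0 0 0 0 1 :: bit ut)"
definition "dZ = (U 0 0 1 0 0 0 1 1 0 0 :: bit ut)"

lemmas cdefs = cA_def cB_def cX_def cY_def dX_def dY_def dZ_def

lemma ne_uone[simp]: "cA \<noteq> uone" "cB \<noteq> uone" "cX \<noteq> uone" "cY \<noteq> uone" "dX \<noteq> uone" "dY \<noteq> uone" "dZ \<noteq> uone"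
  by (simp_all add: cdefs uone_def)

lemma comm_AB: "gcomm UG cA cB = t14 1"
  by (simp add: gcomm_UG cdefs umul_def uinv_def Let_def t14_def)

lemma comm_XY: "gcomm UG (gcomm UG cX cY) cX = t14 2"
  "gcomm UG (gcomm UG cX cY) (umul cX (uinv cY)) = t14 2"
  "gcomm UG (gcomm UG cY cX) cY = t14 0"
  "gcomm UG (gcomm UG cY cX) (umul cY (uinv cX)) = t14 2"
  by (simp_all add: gcomm_UG cdefs umul_def uinv_def Let_def t14_def)

lemma e45_AB[simp]: "e45 cA = 0" "e45 cB = 0" "e45 cX = 0" "e45 cY = 0" "e45 uone = 0"
  by (simp_all add: cdefs uone_def)

lemma e45_t14[simp]: "e45 (t14 k) = 0" by (simp add: t14_def)

definition "Wd = (U 0 0 0 1 0 0 0 0 0 0 :: bit ut)"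

lemma comm_D: "gcomm UG (gcomm UG dX dY) (gcomm UG dY dZ) = Wd"
  by (simp add: gcomm_UG cdefs umul_def uinv_def Let_def Wd_def)

lemma Wd_ne: "Wd \<noteq> uone" by (simp add: Wd_def uone_def)

lemma Wd_central: "umul Wd t = umul t Wd"
  by (cases t) (simp add: Wd_def umul_def algebra_simps)

lemma D_vals: "gcomm UG dX dZ = Wd" "gcomm UG (gcomm UG dX dY) dX = Wd" "gcomm UG (gcomm UG dX dY) dY = Wd"
   "gcomm UG (gcomm UG dY dZ) dY = uone" "gcomm UG (gcomm UG dY dZ) dZ = uone"
  by (simp_all add: gcomm_UG cdefs umul_def uinv_def Let_def Wd_def uone_def)

lemma comm_XY2: "gcomm UG (gcomm UG cX cY) cY = t14 0" "gcomm UG (gcomm UG cY cX) cX = t14 (-2)"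
  by (simp_all add: gcomm_UG cdefs umul_def uinv_def Let_def t14_def)

lemma comm_BA: "gcomm UG cB cA = t14 (-1)"
  by (simp add: gcomm_UG cdefs umul_def uinv_def Let_def t14_def)

lemma gcomm_self: "gcomm UG p p = uone"
  using group.gcomm_commute[OF UG_group, of p p] by simp

lemma upow1: "uone [^]\<^bsub>UG\<^esub> (k::int) = (uone :: 'r::comm_ring_1 ut)"
  using group.int_pow_one[OF UG_group, of k] by simp

lemma t14_mul: "umul (t14 a) (t14 b) = t14 (a + b)" by (simp add: t14_def umul_def)



lemma detUG: "det UG g" by (simp add: det_def det_axioms_def UG_group)

lemma ex_uone: "(\<exists>k. uone = t14 k) = True" "(\<exists>k. t14 j = t14 k) = True"
  by (auto intro: exI[of _ 0] simp: t14_uone)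

lemma distinct_pairs_gen: "distinct xs \<Longrightarrow> (\<And>i. distinct (ys i)) \<Longrightarrow> distinct (concat (map (\<lambda>i. map (Pair i) (ys i)) xs))"
  by (induction xs) (auto simp: distinct_map inj_on_def)

lemma pairs_distinct: "distinct (pairs n)"
  unfolding pairs_def by (simp add: distinct_pairs_gen)

lemma pairs_set: "set (pairs n) = {(i,j). 1 \<le> i \<and> i + 2 \<le> j \<and> j < n}"
  unfolding pairs_def by force

lemma listprod_uone: "listprod UG (map (\<lambda>i. uone) xs) = (uone :: 'r::comm_ring_1 ut)"
  by (induction xs) (simp_all add: listprod_def umul_def uone_def)

lemma umul_uone[simp]: "umul uone x = x" "umul x uone = x"
  by (cases x, simp add: umul_def uone_def)+

lemma a_zero:
  fixes a :: "nat \<Rightarrow> nat \<Rightarrow> int"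
  assumes x: "the_element n a b c d \<in> comm_subgrp (FG n) (RN n) (carrier (FG n))"
    and i0: "1 \<le> i0" "i0 + 1 < j0" "j0 \<le> n - 1"
  shows "a i0 j0 = 0"
proof -
  define g where "g k = (if k = i0 then cA else if k = j0 then cB else uone)" for k
  interpret D: det UG g by (rule detUG)
  have gT: "g k \<in> {cA, cB, uone}" for k by (simp add: g_def)
  have e45g: "e45 (g k) = 0" for k by (simp add: g_def)
  have pair: "\<exists>k. gcomm UG p q = t14 k" if "p \<in> {cA, cB, uone}" "q \<in> {cA, cB, uone}" for p q
    using that by (auto simp: comm_AB comm_BA gcomm_self ex_uone)
  have inner: "gcomm UG (g i) (g (i+1)) = uone" for i
    using i0 by (auto simp: g_def)
  have cen: "ev UG g r \<otimes>\<^bsub>UG\<^esub> g q = g q \<otimes>\<^bsub>UG\<^esub> ev UG g r" if r: "r \<in> ut_relators n" for r q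
  proof -
    have "\<exists>k. ev UG g r = t14 k"
      using D.rel_cases[OF r] pair[OF gT gT] inner by (auto simp: ex_uone)
    then show ?thesis using t14_comm[OF e45g] by auto
  qed
  have "ev UG g (the_element n a b c d) = uone"
    using D.kill[OF cen x] by simp
  moreover have "ev UG g (the_element n a b c d) = t14 (a i0 j0)"
  proof -
    have L1: "listprod UG (map (\<lambda>p. gcomm UG (g (fst p)) (g (snd p)) [^]\<^bsub>UG\<^esub> a (fst p) (snd p)) (pairs n))
       = t14 (a i0 j0)"
    proof -
      have "listprod UG (map (\<lambda>p. gcomm UG (g (fst p)) (g (snd p)) [^]\<^bsub>UG\<^esub> a (fst p) (snd p)) (pairs n))
        = (\<lambda>p. gcomm UG (g (fst p)) (g (snd p)) [^]\<^bsub>UG\<^esub> a (fst p) (snd p)) (i0, j0)"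
      proof (rule group.listprod_single[OF UG_group pairs_distinct])
        show "(i0, j0) \<in> set (pairs n)" using i0 by (simp add: pairs_set)
        show "\<forall>p\<in>set (pairs n). p \<noteq> (i0, j0) \<longrightarrow>
          gcomm UG (g (fst p)) (g (snd p)) [^]\<^bsub>UG\<^esub> a (fst p) (snd p) = \<one>\<^bsub>UG\<^esub>"
        proof (intro ballI impI)
          fix p assume p: "p \<in> set (pairs n)" "p \<noteq> (i0, j0)"
          obtain i j where pij: "p = (i, j)" by fastforce
          then have "1 \<le> i" "i + 2 \<le> j" "j < n" "(i, j) \<noteq> (i0, j0)" using p by (auto simp: pairs_set)
          then have "gcomm UG (g i) (g j) = uone"
            using i0 by (auto simp: g_def)
          then have "gcomm UG (g (fst p)) (g (snd p)) = uone" using pij by simp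
          then show "gcomm UG (g (fst p)) (g (snd p)) [^]\<^bsub>UG\<^esub> a (fst p) (snd p) = \<one>\<^bsub>UG\<^esub>"
            by (simp add: upow1)
        qed
      qed simp
      also have "\<dots> = t14 (a i0 j0)" using i0 by (simp add: g_def comm_AB t14_int_pow)
      finally show ?thesis .
    qed
    have L2: "listprod UG (map (\<lambda>i. gcomm UG (gcomm UG (g i) (g (i+1))) (g i) [^]\<^bsub>UG\<^esub> b i) [1..<n-1]) = uone"
      using inner by (simp add: upow1 listprod_uone)
    have L3: "listprod UG (map (\<lambda>i. gcomm UG (gcomm UG (g i) (g (i+1))) (g i \<otimes>\<^bsub>UG\<^esub> inv\<^bsub>UG\<^esub> g (i+1)) [^]\<^bsub>UG\<^esub> c i) [1..<n-1]) = uone"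
      using inner by (simp add: upow1 listprod_uone)
    have L4: "listprod UG (map (\<lambda>i. gcomm UG (gcomm UG (g i) (g (i+1))) (gcomm UG (g (i+1)) (g (i+2))) [^]\<^bsub>UG\<^esub> d i) [1..<n-2]) = uone"
      using inner by (simp add: upow1 listprod_uone)
    show ?thesis unfolding D.ev_elem L1 L2 L3 L4
      by (simp add: t14_mul[of _ 0, unfolded t14_uone, simplified])
  qed
  ultimately show ?thesis by (simp add: t14_eq_uone)
qed

lemma bc_gen:
  fixes P Q :: "int ut" and a :: "nat \<Rightarrow> nat \<Rightarrow> int"
  assumes x: "the_element n a b c d \<in> comm_subgrp (FG n) (RN n) (carrier (FG n))"
    and i0: "1 \<le> i0" "i0 \<le> n - 2"
    and hP: "gcomm UG (gcomm UG P Q) P = t14 u1" and hQ: "gcomm UG (gcomm UG P Q) Q = t14 u2"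
    and hC: "gcomm UG (gcomm UG P Q) (umul P (uinv Q)) = t14 u3"
    and eP: "e45 P = 0" and eQ: "e45 Q = 0"
  shows "b i0 * u1 + c i0 * u3 = 0"
proof -
  define g where "g k = (if k = i0 then P else if k = i0 + 1 then Q else uone)" for k
  interpret D: det UG g by (rule detUG)
  have e45g: "e45 (g k) = 0" for k using eP eQ by (simp add: g_def)
  have inner: "gcomm UG (g i) (g (i+1)) = uone" if "i \<noteq> i0" for i
    using that by (auto simp: g_def)
  have pr: "gcomm UG (g i) (g j) = uone" if "i + 2 \<le> j" for i j
    using that by (auto simp: g_def)
  have quad: "gcomm UG (gcomm UG (g i) (g (i+1))) (gcomm UG (g (i+1)) (g (i+2))) = uone" for i
  proof (cases "i = i0")
    case True then show ?thesis by (simp add: g_def)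
  next
    case False then show ?thesis using inner[OF False] by simp
  qed
  have trip: "(\<exists>k. gcomm UG (gcomm UG (g i) (g (i+1))) (g i) = t14 k)
      \<and> (\<exists>k. gcomm UG (gcomm UG (g i) (g (i+1))) (g (i+1)) = t14 k)" for i
  proof (cases "i = i0")
    case True then show ?thesis using hP hQ by (auto simp: g_def)
  next
    case False then show ?thesis using inner[OF False] by (simp add: ex_uone)
  qed
  have cen: "ev UG g r \<otimes>\<^bsub>UG\<^esub> g q = g q \<otimes>\<^bsub>UG\<^esub> ev UG g r" if r: "r \<in> ut_relators n" for r q
  proof -
    have "\<exists>k. ev UG g r = t14 k"
      using D.rel_cases[OF r] pr trip quad by (auto simp: ex_uone)
    then show ?thesis using t14_comm[OF e45g] by auto
  qed
  have "ev UG g (the_element n a b c d) = uone"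
    using D.kill[OF cen x] by simp
  moreover have "ev UG g (the_element n a b c d) = t14 (b i0 * u1 + c i0 * u3)"
  proof -
    have L1: "listprod UG (map (\<lambda>p. gcomm UG (g (fst p)) (g (snd p)) [^]\<^bsub>UG\<^esub> a (fst p) (snd p)) (pairs n)) = uone"
    proof -
      have "map (\<lambda>p. gcomm UG (g (fst p)) (g (snd p)) [^]\<^bsub>UG\<^esub> a (fst p) (snd p)) (pairs n)
          = map (\<lambda>p. uone) (pairs n)"
        by (rule map_cong) (auto simp: pairs_set pr upow1)
      then show ?thesis by (metis listprod_uone)
    qed
    have L2: "listprod UG (map (\<lambda>i. gcomm UG (gcomm UG (g i) (g (i+1))) (g i) [^]\<^bsub>UG\<^esub> b i) [1..<n-1]) = t14 (b i0 * u1)"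
    proof -
      have "listprod UG (map (\<lambda>i. gcomm UG (gcomm UG (g i) (g (i+1))) (g i) [^]\<^bsub>UG\<^esub> b i) [1..<n-1])
         = (\<lambda>i. gcomm UG (gcomm UG (g i) (g (i+1))) (g i) [^]\<^bsub>UG\<^esub> b i) i0"
        by (rule group.listprod_single[OF UG_group]) (use i0 inner in \<open>auto simp: upow1\<close>)
      also have "\<dots> = t14 (b i0 * u1)" by (simp add: g_def hP t14_int_pow)
      finally show ?thesis .
    qed
    have L3: "listprod UG (map (\<lambda>i. gcomm UG (gcomm UG (g i) (g (i+1))) (g i \<otimes>\<^bsub>UG\<^esub> inv\<^bsub>UG\<^esub> g (i+1)) [^]\<^bsub>UG\<^esub> c i) [1..<n-1]) = t14 (c i0 * u3)"
    proof -
      have "listprod UG (map (\<lambda>i. gcomm UG (gcomm UG (g i) (g (i+1))) (g i \<otimes>\<^bsub>UG\<^esub> inv\<^bsub>UG\<^esub> g (i+1)) [^]\<^bsub>UG\<^esub> c i) [1..<n-1])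
         = (\<lambda>i. gcomm UG (gcomm UG (g i) (g (i+1))) (g i \<otimes>\<^bsub>UG\<^esub> inv\<^bsub>UG\<^esub> g (i+1)) [^]\<^bsub>UG\<^esub> c i) i0"
        by (rule group.listprod_single[OF UG_group]) (use i0 inner in \<open>auto simp: upow1\<close>)
      also have "\<dots> = t14 (c i0 * u3)" by (simp add: g_def hC t14_int_pow uinv_UG)
      finally show ?thesis .
    qed
    have L4: "listprod UG (map (\<lambda>i. gcomm UG (gcomm UG (g i) (g (i+1))) (gcomm UG (g (i+1)) (g (i+2))) [^]\<^bsub>UG\<^esub> d i) [1..<n-2]) = uone"
      using quad by (simp add: upow1 listprod_uone)
    show ?thesis unfolding D.ev_elem L1 L2 L3 L4
      by (simp add: t14_mul)
  qed
  ultimately show ?thesis by (simp add: t14_eq_uone)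
qed

lemma bc_zero:
  fixes a :: "nat \<Rightarrow> nat \<Rightarrow> int"
  assumes x: "the_element n a b c d \<in> comm_subgrp (FG n) (RN n) (carrier (FG n))"
    and i0: "1 \<le> i0" "i0 \<le> n - 2"
  shows "b i0 = 0 \<and> c i0 = 0"
proof -
  have 1: "b i0 * 2 + c i0 * 2 = 0"
    by (rule bc_gen[OF x i0 comm_XY(1) comm_XY2(1) comm_XY(2)]) simp_all
  have 2: "b i0 * 0 + c i0 * 2 = 0"
    by (rule bc_gen[OF x i0 comm_XY(3) comm_XY2(2) comm_XY(4)]) simp_all
  from 1 2 show ?thesis by simp
qed

lemma d_zero:
  fixes a :: "nat \<Rightarrow> nat \<Rightarrow> int"
  assumes x: "the_element n a b c d \<in> comm_subgrp (FG n) (RN n) (carrier (FG n))"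
    and i0: "1 \<le> i0" "i0 \<le> n - 3" and dd: "d i0 \<in> {0, 1}"
    and az: "\<forall>i j. 1 \<le> i \<and> i + 1 < j \<and> j \<le> n - 1 \<longrightarrow> a i j = 0"
    and bz: "\<forall>i. 1 \<le> i \<and> i \<le> n - 2 \<longrightarrow> b i = 0 \<and> c i = 0"
  shows "d i0 = 0"
proof -
  define g where "g k = (if k = i0 then dX else if k = i0 + 1 then dY else if k = i0 + 2 then dZ else uone)" for k
  interpret D: det UG g by (rule detUG)
  have inner: "gcomm UG (g i) (g (i+1)) = uone" if "i \<noteq> i0" "i \<noteq> i0 + 1" for i
    using that by (auto simp: g_def)
  have pr: "gcomm UG (g i) (g j) \<in> {uone, Wd}" if "i + 2 \<le> j" for i j
    using that by (auto simp: g_def D_vals)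
  have quad: "gcomm UG (gcomm UG (g i) (g (i+1))) (gcomm UG (g (i+1)) (g (i+2))) = (if i = i0 then Wd else uone)" for i
  proof (cases "i = i0")
    case True then show ?thesis by (simp add: g_def comm_D)
  next
    case False
    show ?thesis
    proof (cases "i = i0 + 1")
      case True then show ?thesis by (simp add: g_def)
    next
      case False2: False
      then show ?thesis using inner[OF False False2] False by simp
    qed
  qed
  have trip: "gcomm UG (gcomm UG (g i) (g (i+1))) (g i) \<in> {uone, Wd}
      \<and> gcomm UG (gcomm UG (g i) (g (i+1))) (g (i+1)) \<in> {uone, Wd}" for i
  proof (cases "i = i0 \<or> i = i0 + 1")
    case True then show ?thesis by (auto simp: g_def D_vals)
  next
    case False then show ?thesis using inner[of i] by simp
  qed
  have cen: "ev UG g r \<otimes>\<^bsub>UG\<^esub> g q = g q \<otimes>\<^bsub>UG\<^esub> ev UG g r" if r: "r \<in> ut_relators n" for r q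
  proof -
    have "ev UG g r \<in> {uone, Wd}"
      using D.rel_cases[OF r] pr[simplified] trip[simplified] quad[simplified]
      by (elim disjE exE conjE; simp)
    then show ?thesis using Wd_central by auto
  qed
  have "ev UG g (the_element n a b c d) = uone"
    using D.kill[OF cen x] by simp
  moreover have "ev UG g (the_element n a b c d) = Wd [^]\<^bsub>UG\<^esub> d i0"
  proof -
    have L1: "listprod UG (map (\<lambda>p. gcomm UG (g (fst p)) (g (snd p)) [^]\<^bsub>UG\<^esub> a (fst p) (snd p)) (pairs n)) = uone"
    proof -
      have "map (\<lambda>p. gcomm UG (g (fst p)) (g (snd p)) [^]\<^bsub>UG\<^esub> a (fst p) (snd p)) (pairs n)
          = map (\<lambda>p. uone) (pairs n)"
        by (rule map_cong) (use az in \<open>auto simp: pairs_set\<close>)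
      then show ?thesis by (metis listprod_uone)
    qed
    have L2: "listprod UG (map (\<lambda>i. gcomm UG (gcomm UG (g i) (g (i+1))) (g i) [^]\<^bsub>UG\<^esub> b i) [1..<n-1]) = uone"
    proof -
      have "map (\<lambda>i. gcomm UG (gcomm UG (g i) (g (i+1))) (g i) [^]\<^bsub>UG\<^esub> b i) [1..<n-1] = map (\<lambda>i. uone) [1..<n-1]"
        by (rule map_cong) (use bz in auto)
      then show ?thesis by (metis listprod_uone)
    qed
    have L3: "listprod UG (map (\<lambda>i. gcomm UG (gcomm UG (g i) (g (i+1))) (g i \<otimes>\<^bsub>UG\<^esub> inv\<^bsub>UG\<^esub> g (i+1)) [^]\<^bsub>UG\<^esub> c i) [1..<n-1]) = uone"
    proof -
      have "map (\<lambda>i. gcomm UG (gcomm UG (g i) (g (i+1))) (g i \<otimes>\<^bsub>UG\<^esub> inv\<^bsub>UG\<^esub> g (i+1)) [^]\<^bsub>UG\<^esub> c i) [1..<n-1] = map (\<lambda>i. uone) [1..<n-1]"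
        by (rule map_cong) (use bz in auto)
      then show ?thesis by (metis listprod_uone)
    qed
    have L4: "listprod UG (map (\<lambda>i. gcomm UG (gcomm UG (g i) (g (i+1))) (gcomm UG (g (i+1)) (g (i+2))) [^]\<^bsub>UG\<^esub> d i) [1..<n-2]) = Wd [^]\<^bsub>UG\<^esub> d i0"
    proof -
      have "listprod UG (map (\<lambda>i. gcomm UG (gcomm UG (g i) (g (i+1))) (gcomm UG (g (i+1)) (g (i+2))) [^]\<^bsub>UG\<^esub> d i) [1..<n-2])
         = (\<lambda>i. gcomm UG (gcomm UG (g i) (g (i+1))) (gcomm UG (g (i+1)) (g (i+2))) [^]\<^bsub>UG\<^esub> d i) i0"
        by (rule group.listprod_single[OF UG_group]) (use i0 quad[simplified] in \<open>auto simp: upow1\<close>)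
      also have "\<dots> = Wd [^]\<^bsub>UG\<^esub> d i0" using quad[of i0] by simp
      finally show ?thesis .
    qed
    show ?thesis unfolding D.ev_elem L1 L2 L3 L4 by simp
  qed
  ultimately have "Wd [^]\<^bsub>UG\<^esub> d i0 = uone" by simp
  then show ?thesis using dd Wd_ne group.int_pow_1[OF UG_group, of Wd] by auto
qed



theorem mainTheorem5:
  fixes n :: nat and a :: "nat \<Rightarrow> nat \<Rightarrow> int" and b c d :: "nat \<Rightarrow> int"
  assumes "n \<ge> 3"
    and "\<forall>i. 1 \<le> i \<and> i \<le> n - 3 \<longrightarrow> d i \<in> {0, 1}"
    and "the_element n a b c d \<in> comm_subgrp (FG n) (RN n) (carrier (FG n))"
  shows "(\<forall>i j. 1 \<le> i \<and> i + 1 < j \<and> j \<le> n - 1 \<longrightarrow> a i j = 0)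
       \<and> (\<forall>i. 1 \<le> i \<and> i \<le> n - 2 \<longrightarrow> b i = 0 \<and> c i = 0)
       \<and> (\<forall>i. 1 \<le> i \<and> i \<le> n - 3 \<longrightarrow> d i = 0)"
proof -
  have A: "\<forall>i j. 1 \<le> i \<and> i + 1 < j \<and> j \<le> n - 1 \<longrightarrow> a i j = 0"
    using a_zero[OF assms(3)] by blast
  have B: "\<forall>i. 1 \<le> i \<and> i \<le> n - 2 \<longrightarrow> b i = 0 \<and> c i = 0"
    using bc_zero[OF assms(3)] by blast
  have D: "\<forall>i. 1 \<le> i \<and> i \<le> n - 3 \<longrightarrow> d i = 0"
    using d_zero[OF assms(3) _ _ _ A B] assms(2) by blast
  show ?thesis using A B D by blast
qed

end
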